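(* Let $G$ be a connected graph with $\delta(G)=1$, girth at least $15$, and $G\in\mathcal U$. If $s_1$ is a single star support vertex of $G$, then there is no double star support vertex $s$ of $G$ with $d_G(s_1,s)=3$.
   Context: All graphs are finite and simple. A set $P\subseteq V(G)$ is an open packing if no two distinct vertices of $P$ have a common neighbor; it is maximal if maximal under inclusion among open packings. $\rho^o(G)$ is the maximum size of an open packing and $\rho^o_L(G)$ the minimum size of a maximal open packing; $\mathcal U$ is the class of graphs with $\rho^o_L(G)=\rho^o(G)$. A leaf is a vertex of degree $1$; a support vertex is a vertex adjacent to at least one leaf; $S_G$ is the set of support vertices. A single star support vertex is a support vertex not adjacent to any other support vertex; a double star support vertex is a support vertex adjacent to another support vertex. *)

theory Defs
  imports Main
begin

definition simple_graph :: "'a set \<Rightarrow> ('a \<Rightarrow> 'a \<Rightarrow> bool) \<Rightarrow> bool" where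
  "simple_graph V E \<longleftrightarrow> finite V \<and> (\<forall>u v. E u v \<longrightarrow> u \<in> V \<and> v \<in> V)
     \<and> (\<forall>u v. E u v \<longrightarrow> E v u) \<and> (\<forall>v. \<not> E v v)"

definition nbhd :: "'a set \<Rightarrow> ('a \<Rightarrow> 'a \<Rightarrow> bool) \<Rightarrow> 'a \<Rightarrow> 'a set" where
  "nbhd V E v = {u \<in> V. E v u}"

definition degree :: "'a set \<Rightarrow> ('a \<Rightarrow> 'a \<Rightarrow> bool) \<Rightarrow> 'a \<Rightarrow> nat" where
  "degree V E v = card (nbhd V E v)"

definition min_degree :: "'a set \<Rightarrow> ('a \<Rightarrow> 'a \<Rightarrow> bool) \<Rightarrow> nat" where
  "min_degree V E = Min (degree V E ` V)"

definition walk :: "'a set \<Rightarrow> ('a \<Rightarrow> 'a \<Rightarrow> bool) \<Rightarrow> 'a list \<Rightarrow> bool" where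
  "walk V E xs \<longleftrightarrow> xs \<noteq> [] \<and> set xs \<subseteq> V \<and> successively E xs"

definition connected_graph :: "'a set \<Rightarrow> ('a \<Rightarrow> 'a \<Rightarrow> bool) \<Rightarrow> bool" where
  "connected_graph V E \<longleftrightarrow> V \<noteq> {} \<and>
     (\<forall>u\<in>V. \<forall>v\<in>V. \<exists>xs. walk V E xs \<and> hd xs = u \<and> last xs = v)"

definition gdist :: "'a set \<Rightarrow> ('a \<Rightarrow> 'a \<Rightarrow> bool) \<Rightarrow> 'a \<Rightarrow> 'a \<Rightarrow> nat" where
  "gdist V E u v = (LEAST n. \<exists>xs. walk V E xs \<and> hd xs = u \<and> last xs = v \<and> length xs = Suc n)"

definition is_cycle :: "'a set \<Rightarrow> ('a \<Rightarrow> 'a \<Rightarrow> bool) \<Rightarrow> 'a list \<Rightarrow> bool" where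
  "is_cycle V E xs \<longleftrightarrow> length xs \<ge> 3 \<and> distinct xs \<and> walk V E xs \<and> E (last xs) (hd xs)"

text \<open>girth(G) \<ge> g (acyclic graphs have infinite girth).\<close>
definition girth_at_least :: "'a set \<Rightarrow> ('a \<Rightarrow> 'a \<Rightarrow> bool) \<Rightarrow> nat \<Rightarrow> bool" where
  "girth_at_least V E g \<longleftrightarrow> (\<forall>xs. is_cycle V E xs \<longrightarrow> length xs \<ge> g)"

definition open_packing :: "'a set \<Rightarrow> ('a \<Rightarrow> 'a \<Rightarrow> bool) \<Rightarrow> 'a set \<Rightarrow> bool" where
  "open_packing V E P \<longleftrightarrow> P \<subseteq> V \<and>
     (\<forall>u\<in>P. \<forall>v\<in>P. u \<noteq> v \<longrightarrow> \<not> (\<exists>w\<in>V. E u w \<and> E v w))"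

definition maximal_open_packing :: "'a set \<Rightarrow> ('a \<Rightarrow> 'a \<Rightarrow> bool) \<Rightarrow> 'a set \<Rightarrow> bool" where
  "maximal_open_packing V E P \<longleftrightarrow> open_packing V E P \<and>
     (\<forall>Q. open_packing V E Q \<and> P \<subseteq> Q \<longrightarrow> Q = P)"

definition rho_o :: "'a set \<Rightarrow> ('a \<Rightarrow> 'a \<Rightarrow> bool) \<Rightarrow> nat" where
  "rho_o V E = Max (card ` {P. open_packing V E P})"

definition rho_oL :: "'a set \<Rightarrow> ('a \<Rightarrow> 'a \<Rightarrow> bool) \<Rightarrow> nat" where
  "rho_oL V E = Min (card ` {P. maximal_open_packing V E P})"

definition in_U :: "'a set \<Rightarrow> ('a \<Rightarrow> 'a \<Rightarrow> bool) \<Rightarrow> bool" where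
  "in_U V E \<longleftrightarrow> rho_oL V E = rho_o V E"

definition leaf :: "'a set \<Rightarrow> ('a \<Rightarrow> 'a \<Rightarrow> bool) \<Rightarrow> 'a \<Rightarrow> bool" where
  "leaf V E v \<longleftrightarrow> v \<in> V \<and> degree V E v = 1"

definition support_vertex :: "'a set \<Rightarrow> ('a \<Rightarrow> 'a \<Rightarrow> bool) \<Rightarrow> 'a \<Rightarrow> bool" where
  "support_vertex V E s \<longleftrightarrow> s \<in> V \<and> (\<exists>u\<in>V. E s u \<and> leaf V E u)"

definition single_star_support :: "'a set \<Rightarrow> ('a \<Rightarrow> 'a \<Rightarrow> bool) \<Rightarrow> 'a \<Rightarrow> bool" where
  "single_star_support V E s \<longleftrightarrow> support_vertex V E s \<and>
     \<not> (\<exists>t\<in>V. E s t \<and> support_vertex V E t)"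

definition double_star_support :: "'a set \<Rightarrow> ('a \<Rightarrow> 'a \<Rightarrow> bool) \<Rightarrow> 'a \<Rightarrow> bool" where
  "double_star_support V E s \<longleftrightarrow> support_vertex V E s \<and>
     (\<exists>t\<in>V. E s t \<and> support_vertex V E t)"

end

theory Submission
  imports Defs
begin


definition nb :: "'a list \<Rightarrow> bool" where
  "nb xs \<longleftrightarrow> (\<forall>i. Suc (Suc i) < length xs \<longrightarrow> xs!i \<noteq> xs!Suc(Suc i))"

lemma nb_Nil[simp]: "nb []" and nb_one[simp]: "nb [x]" and nb_two[simp]: "nb [x,y]"
  by (auto simp: nb_def)

lemma nb_Cons3[simp]: "nb (x#y#z#xs) \<longleftrightarrow> x \<noteq> z \<and> nb (y#z#xs)"
proof
  assume h: "nb (x#y#z#xs)"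
  show "x \<noteq> z \<and> nb (y#z#xs)"
  proof
    show "x \<noteq> z" using h[unfolded nb_def, rule_format, of 0] by simp
    show "nb (y#z#xs)" unfolding nb_def
    proof (intro allI impI)
      fix i assume "Suc (Suc i) < length (y#z#xs)"
      then show "(y#z#xs)!i \<noteq> (y#z#xs)!Suc(Suc i)"
        using h[unfolded nb_def, rule_format, of "Suc i"] by simp
    qed
  qed
next
  assume h: "x \<noteq> z \<and> nb (y#z#xs)"
  show "nb (x#y#z#xs)" unfolding nb_def
  proof (intro allI impI)
    fix i assume i: "Suc (Suc i) < length (x#y#z#xs)"
    show "(x#y#z#xs)!i \<noteq> (x#y#z#xs)!Suc(Suc i)"
    proof (cases i)
      case 0 then show ?thesis using h by simp
    next
      case (Suc j)
      then show ?thesis using h i unfolding nb_def by (auto dest: spec[of _ j])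
    qed
  qed
qed

lemma nb_tl: "nb xs \<Longrightarrow> nb (tl xs)"
  unfolding nb_def by (cases xs) (auto dest: spec[of _ "Suc _"])

lemma nb_rev: "nb xs \<Longrightarrow> nb (rev xs)"
  unfolding nb_def
proof (intro allI impI)
  fix i assume h: "\<forall>i. Suc (Suc i) < length xs \<longrightarrow> xs ! i \<noteq> xs ! Suc (Suc i)"
    and i: "Suc (Suc i) < length (rev xs)"
  have "xs ! (length xs - Suc (Suc (Suc i))) \<noteq> xs ! Suc (Suc (length xs - Suc (Suc (Suc i))))"
    using h i by auto
  moreover have "Suc (Suc (length xs - Suc (Suc (Suc i)))) = length xs - Suc i" using i by simp
  ultimately show "rev xs ! i \<noteq> rev xs ! Suc (Suc i)"
    using i by (simp add: rev_nth)
qed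

lemma nb_app:
  assumes "A \<noteq> []" "B \<noteq> []" "nb A" "nb B"
    and "length A \<ge> 2 \<Longrightarrow> A!(length A - 2) \<noteq> hd B"
    and "length B \<ge> 2 \<Longrightarrow> last A \<noteq> B!1"
  shows "nb (A @ B)"
  unfolding nb_def
proof (intro allI impI)
  fix i assume i: "Suc (Suc i) < length (A @ B)"
  consider "Suc (Suc i) < length A" | "i \<ge> length A" | "i = length A - 2" "length A \<ge> 2"
    | "i = length A - 1" by linarith
  then show "(A @ B) ! i \<noteq> (A @ B) ! Suc (Suc i)"
  proof cases
    case 1 then show ?thesis using assms(3) unfolding nb_def by (simp add: nth_append)
  next
    case 2
    then have "Suc (Suc (i - length A)) < length B" using i by simp
    then have "B!(i - length A) \<noteq> B! Suc (Suc (i - length A))" using assms(4) unfolding nb_def by blast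
    moreover have "Suc (Suc i) - length A = Suc (Suc (i - length A))" using 2 by simp
    ultimately show ?thesis using 2 by (simp add: nth_append)
  next
    case 3
    then have "(A@B)!i = A!(length A - 2)" by (auto simp add: nth_append)
    moreover have "Suc (Suc i) = length A" using 3 by simp
    then have "(A@B)! Suc (Suc i) = B!0" by (simp add: nth_append)
    ultimately show ?thesis using assms(5)[OF 3(2)] assms(2) by (simp add: hd_conv_nth)
  next
    case 4
    then have "length A \<ge> 1" using assms(1) by (cases A) auto
    then have "(A@B)!i = last A" using 4 assms(1) by (simp add: nth_append last_conv_nth)
    moreover have "Suc (Suc i) - length A = 1" using 4 \<open>length A \<ge> 1\<close> by simp
    moreover have "length B \<ge> 2" using i 4 \<open>length A \<ge> 1\<close> by simp
    moreover have "\<not> Suc (Suc i) < length A" using 4 by simp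
    ultimately show ?thesis using assms(6) 4 by (simp add: nth_append)
  qed
qed

lemma nb_butlast: "nb (ys @ [x]) \<Longrightarrow> nb ys"
  unfolding nb_def
proof (intro allI impI)
  fix i assume h: "\<forall>i. Suc (Suc i) < length (ys @ [x]) \<longrightarrow> (ys @ [x]) ! i \<noteq> (ys @ [x]) ! Suc (Suc i)"
    and i: "Suc (Suc i) < length ys"
  then have "(ys @ [x]) ! i \<noteq> (ys @ [x]) ! Suc (Suc i)" by simp
  then show "ys ! i \<noteq> ys ! Suc (Suc i)" using i by (simp add: nth_append)
qed

lemma successively_drop: "successively P xs \<Longrightarrow> successively P (drop i xs)"
proof -
  assume "successively P xs"
  then have "successively P (take i xs @ drop i xs)" by simp
  then show ?thesis by (simp only: successively_append_iff)
qed

lemma succ_rev: "(\<forall>u v. E u v \<longrightarrow> E v u) \<Longrightarrow> successively E xs \<Longrightarrow> successively E (rev xs)"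
  by (simp, erule successively_mono, blast)

lemma cyc:
  assumes sg: "simple_graph V E"
  shows "set xs \<subseteq> V \<Longrightarrow> successively E xs \<Longrightarrow> nb xs \<Longrightarrow> \<not> distinct xs
    \<Longrightarrow> \<exists>c. is_cycle V E c \<and> length c < length xs"
proof (induction xs rule: rev_induct)
  case Nil then show ?case by simp
next
  case (snoc x ys)
  have sy: "successively E ys" using snoc.prems(2) by (simp add: successively_append_iff)
  have nby: "nb ys" using snoc.prems(3) by (rule nb_butlast)
  have setys: "set ys \<subseteq> V" using snoc.prems(1) by simp
  show ?case
  proof (cases "distinct ys")
    case False
    from snoc.IH[OF setys sy nby False] show ?thesis by auto
  next
    case True
    then have "x \<in> set ys" using snoc.prems(4) by simp
    then obtain i where i: "i < length ys" "ys!i = x" by (auto simp: in_set_conv_nth)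
    have ne: "ys \<noteq> []" using i by auto
    have Elast: "E (last ys) x" using snoc.prems(2) ne by (simp add: successively_append_iff)
    have noloop: "\<And>v. \<not> E v v" using sg unfolding simple_graph_def by blast
    have i1: "i \<noteq> length ys - 1"
    proof
      assume "i = length ys - 1"
      then have "x = last ys" using i ne by (simp add: last_conv_nth)
      then show False using Elast noloop by simp
    qed
    have i2: "i \<noteq> length ys - 2"
    proof
      assume h: "i = length ys - 2"
      then have "Suc (Suc i) < length (ys @ [x])" using i i1 by simp
      then have "(ys@[x])!i \<noteq> (ys@[x])!Suc(Suc i)" using snoc.prems(3) unfolding nb_def by blast
      moreover have "Suc (Suc i) = length ys" using h i i1 by simp
      ultimately show False using i by (simp add: nth_append)
    qed
    define c where "c = drop i ys"
    have lc: "length c \<ge> 3" using i i1 i2 unfolding c_def by simp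
    have "is_cycle V E c"
      unfolding is_cycle_def walk_def
    proof (intro conjI)
      show "3 \<le> length c" by fact
      show "distinct c" using True unfolding c_def by simp
      show "c \<noteq> []" using lc by auto
      show "set c \<subseteq> V" using setys unfolding c_def by (meson order_trans set_drop_subset)
      show "successively E c" unfolding c_def by (rule successively_drop[OF sy])
      have "last c = last ys" unfolding c_def using i by simp
      moreover have "hd c = x" unfolding c_def using i by (simp add: hd_drop_conv_nth)
      ultimately show "E (last c) (hd c)" using Elast by simp
    qed
    moreover have "length c < length (ys @ [x])" unfolding c_def by simp
    ultimately show ?thesis by blast
  qed
qed

lemma closed_nb:
  assumes sg: "simple_graph V E" and gi: "girth_at_least V E 15"
    and "set zs \<subseteq> V" "successively E zs" "nb zs" "length zs \<ge> 2" "hd zs = last zs"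
    "length zs \<le> 15"
  shows False
proof -
  obtain z zs' where zs: "zs = z # zs'" "zs' \<noteq> []" using assms(6) by (cases zs; cases "tl zs") auto
  have "\<not> distinct zs" using zs assms(7) by (auto simp: last_in_set)
  then obtain c where "is_cycle V E c" "length c < length zs" using cyc[OF sg] assms by blast
  then show False using gi assms(8) unfolding girth_at_least_def by fastforce
qed

lemma uniq:
  assumes sg: "simple_graph V E" and gi: "girth_at_least V E 15"
  shows "set xs \<subseteq> V \<Longrightarrow> successively E xs \<Longrightarrow> nb xs \<Longrightarrow> set ys \<subseteq> V \<Longrightarrow> successively E ys
    \<Longrightarrow> nb ys \<Longrightarrow> xs \<noteq> [] \<Longrightarrow> ys \<noteq> [] \<Longrightarrow> hd xs = hd ys \<Longrightarrow> last xs = last ys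
    \<Longrightarrow> length xs + length ys \<le> 16 \<Longrightarrow> xs = ys"
proof (induction xs arbitrary: ys)
  case Nil then show ?case by simp
next
  case (Cons u xs')
  show ?case
  proof (cases xs')
    case Nil
    show ?thesis
    proof (cases "length ys \<ge> 2")
      case True
      have False
        by (rule closed_nb[OF sg gi, of ys]) (use Cons.prems Nil True in auto)
      then show ?thesis ..
    next
      case False
      then obtain v where "ys = [v]" using Cons.prems(8) False by (cases ys; cases "tl ys") auto
      then show ?thesis using Cons.prems Nil by simp
    qed
  next
    case (Cons x2 xs'')
    note xs' = this
    show ?thesis
    proof (cases "length ys \<ge> 2")
      case False
      then obtain v where ys: "ys = [v]" using Cons.prems(8) False by (cases ys; cases "tl ys") auto
      have False
        by (rule closed_nb[OF sg gi, of "u#xs'"]) (use Cons.prems ys xs' in auto)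
      then show ?thesis ..
    next
      case True
      then obtain y2 ys'' where ys: "ys = u # y2 # ys''" using Cons.prems(9)
        by (cases ys; cases "tl ys") auto
      show ?thesis
      proof (cases "x2 = y2")
        case True
        have "xs' = y2 # ys''"
          apply (rule Cons.IH)
          using Cons.prems ys xs' True by (auto intro: nb_tl[of "u # _", simplified])
        then show ?thesis using ys by simp
      next
        case False
        define W where "W = rev ys @ xs'"
        have nbW: "nb W" unfolding W_def
        proof (rule nb_app)
          show "rev ys \<noteq> []" using ys by simp
          show "xs' \<noteq> []" using xs' by simp
          show "nb (rev ys)" using Cons.prems(6) by (rule nb_rev)
          show "nb xs'" using Cons.prems(3) nb_tl[of "u # xs'"] by simp
          show "rev ys ! (length (rev ys) - 2) \<noteq> hd xs'"
            using False ys xs' by (simp add: rev_nth nth_append)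
          show "last (rev ys) \<noteq> xs' ! 1" if L: "length xs' \<ge> 2"
          proof -
            obtain x3 r where "xs'' = x3 # r" using L xs' by (cases xs'') auto
            then show ?thesis using Cons.prems(3) ys xs' by simp
          qed
        qed
        have False
        proof (rule closed_nb[OF sg gi, of W])
          show "set W \<subseteq> V" using Cons.prems unfolding W_def by auto
          have sym: "\<forall>u v. E u v \<longrightarrow> E v u" using sg unfolding simple_graph_def by blast
          have "successively E (rev ys)" using succ_rev[OF sym Cons.prems(5)] .
          moreover have "successively E xs'" using Cons.prems(2) xs' by simp
          moreover have "E (last (rev ys)) (hd xs')" using Cons.prems(2) ys xs' by simp
          ultimately show "successively E W" unfolding W_def
            using ys xs' by (simp only: successively_append_iff) simp
          show "nb W" by fact
          show "2 \<le> length W" unfolding W_def using ys xs' by simp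
          show "hd W = last W" unfolding W_def using Cons.prems(10) ys xs' by (simp add: hd_rev)
          show "length W \<le> 15" unfolding W_def using Cons.prems(11) xs' by simp
        qed
        then show ?thesis ..
      qed
    qed
  qed
qed



lemma leaf_uniq:
  assumes "simple_graph V E" "leaf V E v" "E v x" "E v y" shows "x = y"
proof -
  have "x \<in> nbhd V E v" "y \<in> nbhd V E v" using assms(1,3,4) unfolding simple_graph_def nbhd_def by auto
  moreover have "card (nbhd V E v) = 1" using assms(2) unfolding leaf_def degree_def by simp
  then obtain z where "nbhd V E v = {z}" by (rule card_1_singletonE)
  ultimately show ?thesis by simp
qed

lemma nonleaf_other:
  assumes sg: "simple_graph V E" and "v \<in> V" "E v r" "\<not> leaf V E v"
  shows "\<exists>e. E v e \<and> e \<noteq> r"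
proof (rule ccontr)
  assume h: "\<not> (\<exists>e. E v e \<and> e \<noteq> r)"
  have "r \<in> V" using assms(3) sg unfolding simple_graph_def by blast
  have "nbhd V E v = {r}"
  proof
    show "nbhd V E v \<subseteq> {r}" using h unfolding nbhd_def by blast
    show "{r} \<subseteq> nbhd V E v" using assms(3) \<open>r \<in> V\<close> unfolding nbhd_def by simp
  qed
  then show False using assms(2,4) unfolding leaf_def degree_def by simp
qed

lemma fin_packings: "simple_graph V E \<Longrightarrow> finite {P. open_packing V E P}"
  unfolding simple_graph_def open_packing_def
  by (rule finite_subset[of _ "Pow V"]) auto

lemma max_ext:
  assumes sg: "simple_graph V E" and op: "open_packing V E S"
  shows "\<exists>P. maximal_open_packing V E P \<and> S \<subseteq> P"
proof -
  let ?F = "{P. open_packing V E P \<and> S \<subseteq> P}"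
  have fin: "finite ?F" using fin_packings[OF sg] by (rule finite_subset[rotated]) auto
  have ne: "?F \<noteq> {}" using op by auto
  obtain P where P: "P \<in> ?F" "\<forall>Q\<in>?F. card Q \<le> card P"
  proof -
    have "card ` ?F \<noteq> {}" using ne by simp
    moreover have "finite (card ` ?F)" using fin by simp
    ultimately have "Max (card ` ?F) \<in> card ` ?F" using Max_in by blast
    then obtain P where "P \<in> ?F" "card P = Max (card ` ?F)" by auto
    moreover have "\<forall>Q\<in>?F. card Q \<le> Max (card ` ?F)" using fin by simp
    ultimately show ?thesis using that by auto
  qed
  have finV: "finite V" using sg unfolding simple_graph_def by simp
  have "maximal_open_packing V E P"
    unfolding maximal_open_packing_def
  proof (intro conjI allI impI)
    show "open_packing V E P" using P by simp
    fix Q assume Q: "open_packing V E Q \<and> P \<subseteq> Q"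
    then have "Q \<in> ?F" using P by auto
    then have "card Q \<le> card P" using P by simp
    moreover have "finite Q" using Q finV unfolding open_packing_def by (auto intro: finite_subset)
    ultimately show "Q = P" using Q card_seteq by blast
  qed
  then show ?thesis using P by auto
qed

lemma U_contra:
  assumes sg: "simple_graph V E" and U: "in_U V E" and P: "maximal_open_packing V E P"
    and Q: "open_packing V E Q" and c: "card P < card Q"
  shows False
proof -
  have finM: "finite (card ` {P. maximal_open_packing V E P})"
    using fin_packings[OF sg] unfolding maximal_open_packing_def
    by (auto intro: finite_subset)
  have "rho_oL V E \<le> card P" unfolding rho_oL_def using finM P by (auto intro: Min_le)
  moreover have "card Q \<le> rho_o V E" unfolding rho_o_def using fin_packings[OF sg] Q
    by (auto intro: Max_ge)
  ultimately show False using U c unfolding in_U_def by simp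
qed

lemma lemmaA:
  assumes sg: "simple_graph V E" and U: "in_U V E"
    and "E u w1" "E u w2" "w1 \<noteq> w2" "support_vertex V E w1" "support_vertex V E w2"
  shows False
proof -
  have sym: "\<And>x y. E x y \<Longrightarrow> E y x" and inV: "\<And>x y. E x y \<Longrightarrow> x \<in> V \<and> y \<in> V"
    and nl: "\<And>x. \<not> E x x"
    using sg unfolding simple_graph_def by auto
  obtain l1 where l1: "l1 \<in> V" "E w1 l1" "leaf V E l1" using assms(6) unfolding support_vertex_def by blast
  obtain l2 where l2: "l2 \<in> V" "E w2 l2" "leaf V E l2" using assms(7) unfolding support_vertex_def by blast
  have "open_packing V E {u}" using assms(3) inV unfolding open_packing_def by auto
  then obtain P where P: "maximal_open_packing V E P" "u \<in> P" using max_ext[OF sg] by blast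
  have opP: "open_packing V E P" using P unfolding maximal_open_packing_def by simp
  have uniqP: "\<And>w x. E x w \<Longrightarrow> E u w \<Longrightarrow> x \<in> P \<Longrightarrow> x = u"
    using opP P(2) inV unfolding open_packing_def by blast
  have lw1: "E l1 w1" using sym l1(2) .
  have lw2: "E l2 w2" using sym l2(2) .
  have lf1: "\<And>y. E l1 y \<Longrightarrow> y = w1" using leaf_uniq[OF sg l1(3) _ lw1] by blast
  have lf2: "\<And>y. E l2 y \<Longrightarrow> y = w2" using leaf_uniq[OF sg l2(3) _ lw2] by blast
  have ul1: "u \<noteq> l1" using lf1 assms(3,4,5) by metis
  have ul2: "u \<noteq> l2" using lf2 assms(3,4,5) by metis
  have l1P: "l1 \<notin> P" using uniqP[OF lw1 assms(3)] ul1 by metis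
  have l2P: "l2 \<notin> P" using uniqP[OF lw2 assms(4)] ul2 by metis
  have l12: "l1 \<noteq> l2" using lf2 lw1 assms(5) by metis
  define Q where "Q = (P - {u}) \<union> {l1, l2}"
  have "open_packing V E Q"
    unfolding open_packing_def
  proof (intro conjI ballI impI)
    show "Q \<subseteq> V" using opP l1 l2 unfolding Q_def open_packing_def by auto
    fix x y assume x: "x \<in> Q" and y: "y \<in> Q" and xy: "x \<noteq> y"
    show "\<not> (\<exists>w\<in>V. E x w \<and> E y w)"
    proof
      assume "\<exists>w\<in>V. E x w \<and> E y w"
      then obtain w where w: "E x w" "E y w" by blast
      have A: "\<And>z. z \<in> P - {u} \<Longrightarrow> E z w \<Longrightarrow> E l1 w \<Longrightarrow> False"
      proof -
        fix z assume "z \<in> P - {u}" "E z w" "E l1 w"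
        then have "w = w1" using lf1 by simp
        then show False using uniqP[of z w] \<open>E z w\<close> \<open>z \<in> P - {u}\<close> assms(3) by simp
      qed
      have B: "\<And>z. z \<in> P - {u} \<Longrightarrow> E z w \<Longrightarrow> E l2 w \<Longrightarrow> False"
      proof -
        fix z assume "z \<in> P - {u}" "E z w" "E l2 w"
        then have "w = w2" using lf2 by simp
        then show False using uniqP[of z w] \<open>E z w\<close> \<open>z \<in> P - {u}\<close> assms(4) by simp
      qed
      have PP: "\<And>a b. a \<in> P \<Longrightarrow> b \<in> P \<Longrightarrow> a \<noteq> b \<Longrightarrow> E a w \<Longrightarrow> E b w \<Longrightarrow> False"
      proof -
        fix a b assume "a \<in> P" "b \<in> P" "a \<noteq> b" "E a w" "E b w"
        moreover have "w \<in> V" using inV[OF w(1)] by simp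
        ultimately show False using opP unfolding open_packing_def by blast
      qed
      have w12: "E l1 w \<Longrightarrow> E l2 w \<Longrightarrow> False" using lf1 lf2 assms(5) by metis
      have "x \<in> P - {u} \<or> x = l1 \<or> x = l2" "y \<in> P - {u} \<or> y = l1 \<or> y = l2"
        using x y unfolding Q_def by auto
      then show False using PP A B w12 w xy by auto
    qed
  qed
  moreover have "card Q = card P + 1"
  proof -
    have finP: "finite P" using opP sg unfolding open_packing_def simple_graph_def
      by (auto intro: finite_subset)
    have "card (P - {u}) = card P - 1" using P(2) finP by simp
    moreover have "card P \<ge> 1" using P(2) finP by (auto simp: card_gt_0_iff Suc_le_eq)
    moreover have "card Q = card (P - {u}) + 2" unfolding Q_def using l1P l2P l12 finP
      by (simp add: card_Un_disjoint)
    ultimately show ?thesis by simp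
  qed
  ultimately show False using U_contra[OF sg U P(1), of Q] by simp
qed



lemma no_cn:
  fixes W :: "'a list" and x y w :: 'a
  assumes sg: "simple_graph V E" and gi: "girth_at_least V E 15"
    and "set W \<subseteq> V" "successively E W" "nb W" "W \<noteq> []" "hd W = x" "last W = y" "x \<noteq> y"
    "length W \<le> 13" "length W \<noteq> 3" "E x w" "E y w"
  shows False
proof -
  have sym: "E w y" using assms(13) sg unfolding simple_graph_def by blast
  have wV: "w \<in> V" using assms(12) sg unfolding simple_graph_def by blast
  have xV: "x \<in> V" "y \<in> V" using assms(12,13) sg unfolding simple_graph_def by blast+
  have "W = [x, w, y]"
    by (rule uniq[OF sg gi]) (use assms sym wV xV in auto)
  then show False using assms(11) by simp
qed

lemma no_eq:
  fixes W :: "'a list"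
  assumes sg: "simple_graph V E" and gi: "girth_at_least V E 15"
    and "set W \<subseteq> V" "successively E W" "nb W" "length W \<ge> 2" "hd W = last W" "length W \<le> 15"
  shows False
  using closed_nb[OF sg gi] assms(3-) by blast



theorem claim2:
  fixes V :: "'a set" and E :: "'a \<Rightarrow> 'a \<Rightarrow> bool" and s1 :: 'a
  assumes "simple_graph V E"
    and "connected_graph V E"
    and "min_degree V E = 1"
    and "girth_at_least V E 15"
    and "in_U V E"
    and "single_star_support V E s1"
  shows "\<not> (\<exists>s\<in>V. double_star_support V E s \<and> gdist V E s1 s = 3)"
proof
  assume "\<exists>s\<in>V. double_star_support V E s \<and> gdist V E s1 s = 3"
  then obtain s where sV: "s \<in> V" and ds: "double_star_support V E s" and gd: "gdist V E s1 s = 3"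
    by blast
  note sg = assms(1) and gi = assms(4) and U = assms(5)
  have sym: "\<And>x y. E x y \<Longrightarrow> E y x" and inV1: "\<And>x y. E x y \<Longrightarrow> x \<in> V"
    and inV2: "\<And>x y. E x y \<Longrightarrow> y \<in> V" and nl: "\<And>x. \<not> E x x"
    using sg unfolding simple_graph_def by auto
  have ss1: "support_vertex V E s1" and nosup0: "\<not> (\<exists>t\<in>V. E s1 t \<and> support_vertex V E t)"
    using assms(6) unfolding single_star_support_def by auto
  have nosup: "\<And>x. E s1 x \<Longrightarrow> \<not> support_vertex V E x"
  proof
    fix x assume "E s1 x" "support_vertex V E x"
    then show False using nosup0 inV2[of s1 x] by blast
  qed
  have s1V: "s1 \<in> V" using ss1 unfolding support_vertex_def by blast
  obtain l1 where l1: "E s1 l1" "leaf V E l1" using ss1 unfolding support_vertex_def by blast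
  have ssup: "support_vertex V E s" and "\<exists>t\<in>V. E s t \<and> support_vertex V E t"
    using ds unfolding double_star_support_def by auto
  then obtain t where st: "E s t" and tsup: "support_vertex V E t" by blast
  obtain lt where tlt: "E t lt" "leaf V E lt" using tsup unfolding support_vertex_def by blast
  let ?Pn = "\<lambda>n. \<exists>xs. walk V E xs \<and> hd xs = s1 \<and> last xs = s \<and> length xs = Suc n"
  have exn: "\<exists>n. ?Pn n"
  proof -
    obtain xs where xs: "walk V E xs" "hd xs = s1" "last xs = s"
      using assms(2) s1V sV unfolding connected_graph_def by blast
    moreover have "length xs = Suc (length xs - 1)" using xs(1) unfolding walk_def by (cases xs) auto
    ultimately show ?thesis by blast
  qed
  have "?Pn (gdist V E s1 s)" unfolding gdist_def by (rule LeastI_ex[OF exn])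
  then obtain xs where xs: "walk V E xs" "hd xs = s1" "last xs = s" "length xs = 4" using gd by auto
  have not1: "\<not> ?Pn 1"
  proof -
    have "1 < (LEAST n. ?Pn n)" using gd unfolding gdist_def by simp
    then show ?thesis by (rule not_less_Least)
  qed
  obtain x0 a b x3 where xs4: "xs = [x0, a, b, x3]"
    using xs(4) by (auto simp: length_Suc_conv eval_nat_numeral)
  have x0: "x0 = s1" and x3: "x3 = s" using xs(2,3) xs4 by auto
  have s1a: "E s1 a" and ab: "E a b" and bs: "E b s" using xs(1) xs4 x0 x3 unfolding walk_def by auto
  have s1b: "s1 \<noteq> b"
  proof
    assume "s1 = b"
    then have "walk V E [s1, s]" using bs s1V sV unfolding walk_def by simp
    then show False using not1 by force
  qed
  have as: "a \<noteq> s"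
  proof
    assume "a = s"
    then have "walk V E [s1, s]" using s1a s1V sV unfolding walk_def by simp
    then show False using not1 by force
  qed
  have bt: "b \<noteq> t"
  proof
    assume "b = t"
    then show False using lemmaA[OF sg U sym[OF s1a] ab s1b ss1] tsup by simp
  qed
  have l1a: "l1 \<noteq> a"
  proof
    assume h: "l1 = a"
    have "leaf V E a" using l1(2) h by simp
    then have "s1 = b" using leaf_uniq[OF sg _ sym[OF s1a] ab] by simp
    then show False using s1b by simp
  qed
  have slt: "s \<noteq> lt"
  proof
    assume h: "s = lt"
    have "leaf V E s" using tlt(2) h by simp
    then have "t = b" using leaf_uniq[OF sg _ st sym[OF bs]] by simp
    then show False using bt by simp
  qed
  have aV: "a \<in> V" and bV: "b \<in> V" and tV: "t \<in> V" and ltV: "lt \<in> V" and l1V: "l1 \<in> V"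
    using inV2[OF s1a] inV2[OF ab] inV2[OF st] inV2[OF tlt(1)] inV2[OF l1(1)] by auto
  note cE = s1a ab bs st tlt(1) l1(1) sym[OF s1a] sym[OF ab] sym[OF bs] sym[OF st] sym[OF tlt(1)] sym[OF l1(1)]
  have en1: "s1 \<noteq> a" using nl s1a by metis
  have en2: "a \<noteq> b" using nl ab by metis
  have en3: "b \<noteq> s" using nl bs by metis
  have en4: "s \<noteq> t" using nl st by metis
  have en5: "t \<noteq> lt" using nl tlt(1) by metis
  have en6: "s1 \<noteq> l1" using nl l1(1) by metis
  note cN = en1 en2 en3 en4 en5 en6 not_sym[OF en1] not_sym[OF en2] not_sym[OF en3] not_sym[OF en4] not_sym[OF en5] not_sym[OF en6] s1b as bt l1a slt not_sym[OF s1b] not_sym[OF as] not_sym[OF bt] not_sym[OF l1a] not_sym[OF slt]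
  note cV = s1V sV aV bV tV ltV l1V
  define br where "br = (\<lambda>q r p. E r q \<and> q \<noteq> p \<and> ((p = s1 \<and> E s1 r \<and> r \<noteq> a)
     \<or> (p = s \<and> E s r \<and> r \<noteq> b \<and> r \<noteq> t) \<or> (p = t \<and> E t r \<and> r \<noteq> s \<and> r \<noteq> lt)))"
  have brF: "\<exists>f e. E q e \<and> e \<noteq> r \<and> E e f \<and> f \<noteq> q" if h: "br q r p" for q r p
  proof -
    have Erq: "E r q" and qp: "q \<noteq> p" using h unfolding br_def by auto
    have c3: "(p = s1 \<and> E s1 r \<and> r \<noteq> a) \<or> (p = s \<and> E s r \<and> r \<noteq> b \<and> r \<noteq> t)
       \<or> (p = t \<and> E t r \<and> r \<noteq> s \<and> r \<noteq> lt)" using h unfolding br_def by simp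
    have key: "E r p \<and> support_vertex V E p \<and> \<not> support_vertex V E r"
    proof -
      { assume c: "p = s1 \<and> E s1 r \<and> r \<noteq> a"
        then have ?thesis using ss1 nosup sym by auto }
      moreover
      { assume c: "p = s \<and> E s r \<and> r \<noteq> b \<and> r \<noteq> t"
        have "\<not> support_vertex V E r"
        proof
          assume rs: "support_vertex V E r"
          have "t \<noteq> r" using c by auto
          then show False using lemmaA[OF sg U st _ _ tsup rs] c by auto
        qed
        then have ?thesis using c ssup sym by auto }
      moreover
      { assume c: "p = t \<and> E t r \<and> r \<noteq> s \<and> r \<noteq> lt"
        have "\<not> support_vertex V E r"
        proof
          assume rs: "support_vertex V E r"
          have "s \<noteq> r" using c by auto
          then show False using lemmaA[OF sg U sym[OF st] _ _ ssup rs] c by auto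
        qed
        then have ?thesis using c tsup sym by auto }
      ultimately show ?thesis using c3 by blast
    qed
    have qV: "q \<in> V" using inV2[OF Erq] .
    have rV: "r \<in> V" using inV1[OF Erq] .
    have qnl: "\<not> leaf V E q"
    proof
      assume "leaf V E q"
      then have "support_vertex V E r" using rV qV Erq unfolding support_vertex_def by blast
      then show False using key by simp
    qed
    have qns: "\<not> support_vertex V E q"
    proof
      assume qs: "support_vertex V E q"
      have "p \<noteq> q" using qp by simp
      then show False using lemmaA[OF sg U _ Erq _ _ qs] key by blast
    qed
    obtain e where e: "E q e" "e \<noteq> r" using nonleaf_other[OF sg qV sym[OF Erq] qnl] by blast
    have eV: "e \<in> V" using inV2[OF e(1)] .
    have enl: "\<not> leaf V E e"
    proof
      assume "leaf V E e"
      then have "support_vertex V E q" using qV eV e(1) unfolding support_vertex_def by blast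
      then show False using qns by simp
    qed
    obtain f where f: "E e f" "f \<noteq> q" using nonleaf_other[OF sg eV sym[OF e(1)] enl] by blast
    show ?thesis using e f by blast
  qed
  define D where "D = {q. \<exists>r p. br q r p}"
  have "\<forall>q\<in>D. \<exists>f. \<exists>r p e. br q r p \<and> E q e \<and> e \<noteq> r \<and> E e f \<and> f \<noteq> q"
  proof
    fix q assume "q \<in> D"
    then obtain r p where h: "br q r p" unfolding D_def by blast
    then obtain f e where "E q e \<and> e \<noteq> r \<and> E e f \<and> f \<noteq> q" using brF by blast
    then show "\<exists>f. \<exists>r p e. br q r p \<and> E q e \<and> e \<noteq> r \<and> E e f \<and> f \<noteq> q" using h by blast
  qed
  then obtain F where F: "\<forall>q\<in>D. \<exists>r p e. br q r p \<and> E q e \<and> e \<noteq> r \<and> E e (F q) \<and> F q \<noteq> q"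
    by (rule bchoice_iff[THEN iffD1, elim_format]) blast

  have R2: False if qD: "q \<in> D" and vI: "v \<in> {a, b, lt}" and ne: "F q \<noteq> v" and w1: "E (F q) w" and w2: "E v w" for q v w
  proof -
    obtain r p e where T: "br q r p" "E q e" "e \<noteq> r" "E e (F q)" "F q \<noteq> q" using F qD by blast
    have B: "E r q" "q \<noteq> p" and B3: "(p = s1 \<and> E s1 r \<and> r \<noteq> a) \<or> (p = s \<and> E s r \<and> r \<noteq> b \<and> r \<noteq> t)
       \<or> (p = t \<and> E t r \<and> r \<noteq> s \<and> r \<noteq> lt)" using T(1) unfolding br_def by auto
    note tf = T(2-5) B sym[OF T(2)] sym[OF T(4)] sym[OF B(1)] not_sym[OF T(3)] not_sym[OF T(5)] not_sym[OF B(2)]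
      inV1[OF T(2)] inV2[OF T(2)] inV2[OF T(4)] inV1[OF B(1)]

    have c_s1_a: False if "p = s1" "E s1 r" "r \<noteq> a" "v = a"
      by (rule no_cn[OF sg gi, of "[F q, e, q, r, s1, a]" "F q" "v" "w"]) (simp_all add: that sym[OF that(2)] ne[unfolded that(4)] w2[unfolded that(4)] B(2)[unfolded that(1)] not_sym[OF B(2)[unfolded that(1)]] tf cE cN cV w1 w2 not_sym[OF that(3)] not_sym[OF ne] ne)
    have c_s1_b: False if "p = s1" "E s1 r" "r \<noteq> a" "v = b"
      by (rule no_cn[OF sg gi, of "[F q, e, q, r, s1, a, b]" "F q" "v" "w"]) (simp_all add: that sym[OF that(2)] ne[unfolded that(4)] w2[unfolded that(4)] B(2)[unfolded that(1)] not_sym[OF B(2)[unfolded that(1)]] tf cE cN cV w1 w2 not_sym[OF that(3)] not_sym[OF ne] ne)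
    have c_s1_lt: False if "p = s1" "E s1 r" "r \<noteq> a" "v = lt"
      by (rule no_cn[OF sg gi, of "[F q, e, q, r, s1, a, b, s, t, lt]" "F q" "v" "w"]) (simp_all add: that sym[OF that(2)] ne[unfolded that(4)] w2[unfolded that(4)] B(2)[unfolded that(1)] not_sym[OF B(2)[unfolded that(1)]] tf cE cN cV w1 w2 not_sym[OF that(3)] not_sym[OF ne] ne)
    have c_s_a: False if "p = s" "E s r" "r \<noteq> b" "r \<noteq> t" "v = a"
      by (rule no_cn[OF sg gi, of "[F q, e, q, r, s, b, a]" "F q" "v" "w"]) (simp_all add: that sym[OF that(2)] ne[unfolded that(5)] w2[unfolded that(5)] B(2)[unfolded that(1)] not_sym[OF B(2)[unfolded that(1)]] tf cE cN cV w1 w2 not_sym[OF that(3)] not_sym[OF that(4)] not_sym[OF ne] ne)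
    have c_s_b: False if "p = s" "E s r" "r \<noteq> b" "r \<noteq> t" "v = b"
      by (rule no_cn[OF sg gi, of "[F q, e, q, r, s, b]" "F q" "v" "w"]) (simp_all add: that sym[OF that(2)] ne[unfolded that(5)] w2[unfolded that(5)] B(2)[unfolded that(1)] not_sym[OF B(2)[unfolded that(1)]] tf cE cN cV w1 w2 not_sym[OF that(3)] not_sym[OF that(4)] not_sym[OF ne] ne)
    have c_s_lt: False if "p = s" "E s r" "r \<noteq> b" "r \<noteq> t" "v = lt"
      by (rule no_cn[OF sg gi, of "[F q, e, q, r, s, t, lt]" "F q" "v" "w"]) (simp_all add: that sym[OF that(2)] ne[unfolded that(5)] w2[unfolded that(5)] B(2)[unfolded that(1)] not_sym[OF B(2)[unfolded that(1)]] tf cE cN cV w1 w2 not_sym[OF that(3)] not_sym[OF that(4)] not_sym[OF ne] ne)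
    have c_t_a: False if "p = t" "E t r" "r \<noteq> s" "r \<noteq> lt" "v = a"
      by (rule no_cn[OF sg gi, of "[F q, e, q, r, t, s, b, a]" "F q" "v" "w"]) (simp_all add: that sym[OF that(2)] ne[unfolded that(5)] w2[unfolded that(5)] B(2)[unfolded that(1)] not_sym[OF B(2)[unfolded that(1)]] tf cE cN cV w1 w2 not_sym[OF that(3)] not_sym[OF that(4)] not_sym[OF ne] ne)
    have c_t_b: False if "p = t" "E t r" "r \<noteq> s" "r \<noteq> lt" "v = b"
      by (rule no_cn[OF sg gi, of "[F q, e, q, r, t, s, b]" "F q" "v" "w"]) (simp_all add: that sym[OF that(2)] ne[unfolded that(5)] w2[unfolded that(5)] B(2)[unfolded that(1)] not_sym[OF B(2)[unfolded that(1)]] tf cE cN cV w1 w2 not_sym[OF that(3)] not_sym[OF that(4)] not_sym[OF ne] ne)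
    have c_t_lt: False if "p = t" "E t r" "r \<noteq> s" "r \<noteq> lt" "v = lt"
      by (rule no_cn[OF sg gi, of "[F q, e, q, r, t, lt]" "F q" "v" "w"]) (simp_all add: that sym[OF that(2)] ne[unfolded that(5)] w2[unfolded that(5)] B(2)[unfolded that(1)] not_sym[OF B(2)[unfolded that(1)]] tf cE cN cV w1 w2 not_sym[OF that(3)] not_sym[OF that(4)] not_sym[OF ne] ne)
    have v3: "v = a \<or> v = b \<or> v = lt" using vI by simp
    have X_s1: False if h: "p = s1" "E s1 r" "r \<noteq> a"
      using v3 c_s1_a[OF h] c_s1_b[OF h] c_s1_lt[OF h] by blast
    have X_s: False if h: "p = s" "E s r" "r \<noteq> b" "r \<noteq> t"
      using v3 c_s_a[OF h] c_s_b[OF h] c_s_lt[OF h] by blast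
    have X_t: False if h: "p = t" "E t r" "r \<noteq> s" "r \<noteq> lt"
      using v3 c_t_a[OF h] c_t_b[OF h] c_t_lt[OF h] by blast
    show False using B3 X_s1 X_s X_t by blast
  qed
  have R1: False if qD: "q \<in> D" and qD': "q' \<in> D" and ne: "F q \<noteq> F q'" and w1: "E (F q) w" and w2: "E (F q') w" for q q' w
  proof -
    obtain r p e where T: "br q r p" "E q e" "e \<noteq> r" "E e (F q)" "F q \<noteq> q" using F qD by blast
    have B: "E r q" "q \<noteq> p" and B3: "(p = s1 \<and> E s1 r \<and> r \<noteq> a) \<or> (p = s \<and> E s r \<and> r \<noteq> b \<and> r \<noteq> t)
       \<or> (p = t \<and> E t r \<and> r \<noteq> s \<and> r \<noteq> lt)" using T(1) unfolding br_def by auto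
    note tf = T(2-5) B sym[OF T(2)] sym[OF T(4)] sym[OF B(1)] not_sym[OF T(3)] not_sym[OF T(5)] not_sym[OF B(2)]
      inV1[OF T(2)] inV2[OF T(2)] inV2[OF T(4)] inV1[OF B(1)]
    obtain r' p' e' where T': "br q' r' p'" "E q' e'" "e' \<noteq> r'" "E e' (F q')" "F q' \<noteq> q'" using F qD' by blast
    have B': "E r' q'" "q' \<noteq> p'" and B3': "(p' = s1 \<and> E s1 r' \<and> r' \<noteq> a) \<or> (p' = s \<and> E s r' \<and> r' \<noteq> b \<and> r' \<noteq> t)
       \<or> (p' = t \<and> E t r' \<and> r' \<noteq> s \<and> r' \<noteq> lt)" using T'(1) unfolding br_def by auto
    note tf' = T'(2-5) B' sym[OF T'(2)] sym[OF T'(4)] sym[OF B'(1)] not_sym[OF T'(3)] not_sym[OF T'(5)] not_sym[OF B'(2)]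
      inV1[OF T'(2)] inV2[OF T'(2)] inV2[OF T'(4)] inV1[OF B'(1)]
    have qq: "q \<noteq> q'" using ne by auto

    have d_s1_s1: False if "p = s1" "E s1 r" "r \<noteq> a" "p' = s1" "E s1 r'" "r' \<noteq> a"
    proof (cases "r = r'")
      case True
      show False by (rule no_cn[OF sg gi, of "[F q, e, q, r, q', e', F q']" "F q" "F q'" "w"]) (simp_all add: B'(1)[folded True] T'(3)[folded True] not_sym[OF T'(3)[folded True]] that B(2)[unfolded that(1)] B'(2)[unfolded that(4)] not_sym[OF B(2)[unfolded that(1)]] not_sym[OF B'(2)[unfolded that(4)]] sym[OF that(2)] sym[OF that(5)] not_sym[OF that(3)] not_sym[OF that(6)] tf tf' cE cN cV ne not_sym[OF ne] qq not_sym[OF qq] w1 w2)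
    next
      case False
      show False by (rule no_cn[OF sg gi, of "[F q, e, q, r, s1, r', q', e', F q']" "F q" "F q'" "w"]) (simp_all add: False not_sym[OF False] that B(2)[unfolded that(1)] B'(2)[unfolded that(4)] not_sym[OF B(2)[unfolded that(1)]] not_sym[OF B'(2)[unfolded that(4)]] sym[OF that(2)] sym[OF that(5)] not_sym[OF that(3)] not_sym[OF that(6)] tf tf' cE cN cV ne not_sym[OF ne] qq not_sym[OF qq] w1 w2)
    qed
    have d_s1_s: False if "p = s1" "E s1 r" "r \<noteq> a" "p' = s" "E s r'" "r' \<noteq> b" "r' \<noteq> t"
      by (rule no_cn[OF sg gi, of "[F q, e, q, r, s1, a, b, s, r', q', e', F q']" "F q" "F q'" "w"]) (simp_all add: that B(2)[unfolded that(1)] B'(2)[unfolded that(4)] not_sym[OF B(2)[unfolded that(1)]] not_sym[OF B'(2)[unfolded that(4)]] sym[OF that(2)] sym[OF that(5)] not_sym[OF that(3)] not_sym[OF that(6)] not_sym[OF that(7)] tf tf' cE cN cV ne not_sym[OF ne] qq not_sym[OF qq] w1 w2)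
    have d_s1_t: False if "p = s1" "E s1 r" "r \<noteq> a" "p' = t" "E t r'" "r' \<noteq> s" "r' \<noteq> lt"
      by (rule no_cn[OF sg gi, of "[F q, e, q, r, s1, a, b, s, t, r', q', e', F q']" "F q" "F q'" "w"]) (simp_all add: that B(2)[unfolded that(1)] B'(2)[unfolded that(4)] not_sym[OF B(2)[unfolded that(1)]] not_sym[OF B'(2)[unfolded that(4)]] sym[OF that(2)] sym[OF that(5)] not_sym[OF that(3)] not_sym[OF that(6)] not_sym[OF that(7)] tf tf' cE cN cV ne not_sym[OF ne] qq not_sym[OF qq] w1 w2)
    have d_s_s1: False if "p = s" "E s r" "r \<noteq> b" "r \<noteq> t" "p' = s1" "E s1 r'" "r' \<noteq> a"
      by (rule no_cn[OF sg gi, of "[F q, e, q, r, s, b, a, s1, r', q', e', F q']" "F q" "F q'" "w"]) (simp_all add: that B(2)[unfolded that(1)] B'(2)[unfolded that(5)] not_sym[OF B(2)[unfolded that(1)]] not_sym[OF B'(2)[unfolded that(5)]] sym[OF that(2)] sym[OF that(6)] not_sym[OF that(3)] not_sym[OF that(4)] not_sym[OF that(7)] tf tf' cE cN cV ne not_sym[OF ne] qq not_sym[OF qq] w1 w2)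
    have d_s_s: False if "p = s" "E s r" "r \<noteq> b" "r \<noteq> t" "p' = s" "E s r'" "r' \<noteq> b" "r' \<noteq> t"
    proof (cases "r = r'")
      case True
      show False by (rule no_cn[OF sg gi, of "[F q, e, q, r, q', e', F q']" "F q" "F q'" "w"]) (simp_all add: B'(1)[folded True] T'(3)[folded True] not_sym[OF T'(3)[folded True]] that B(2)[unfolded that(1)] B'(2)[unfolded that(5)] not_sym[OF B(2)[unfolded that(1)]] not_sym[OF B'(2)[unfolded that(5)]] sym[OF that(2)] sym[OF that(6)] not_sym[OF that(3)] not_sym[OF that(4)] not_sym[OF that(7)] not_sym[OF that(8)] tf tf' cE cN cV ne not_sym[OF ne] qq not_sym[OF qq] w1 w2)
    next
      case False
      show False by (rule no_cn[OF sg gi, of "[F q, e, q, r, s, r', q', e', F q']" "F q" "F q'" "w"]) (simp_all add: False not_sym[OF False] that B(2)[unfolded that(1)] B'(2)[unfolded that(5)] not_sym[OF B(2)[unfolded that(1)]] not_sym[OF B'(2)[unfolded that(5)]] sym[OF that(2)] sym[OF that(6)] not_sym[OF that(3)] not_sym[OF that(4)] not_sym[OF that(7)] not_sym[OF that(8)] tf tf' cE cN cV ne not_sym[OF ne] qq not_sym[OF qq] w1 w2)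
    qed
    have d_s_t: False if "p = s" "E s r" "r \<noteq> b" "r \<noteq> t" "p' = t" "E t r'" "r' \<noteq> s" "r' \<noteq> lt"
      by (rule no_cn[OF sg gi, of "[F q, e, q, r, s, t, r', q', e', F q']" "F q" "F q'" "w"]) (simp_all add: that B(2)[unfolded that(1)] B'(2)[unfolded that(5)] not_sym[OF B(2)[unfolded that(1)]] not_sym[OF B'(2)[unfolded that(5)]] sym[OF that(2)] sym[OF that(6)] not_sym[OF that(3)] not_sym[OF that(4)] not_sym[OF that(7)] not_sym[OF that(8)] tf tf' cE cN cV ne not_sym[OF ne] qq not_sym[OF qq] w1 w2)
    have d_t_s1: False if "p = t" "E t r" "r \<noteq> s" "r \<noteq> lt" "p' = s1" "E s1 r'" "r' \<noteq> a"
      by (rule no_cn[OF sg gi, of "[F q, e, q, r, t, s, b, a, s1, r', q', e', F q']" "F q" "F q'" "w"]) (simp_all add: that B(2)[unfolded that(1)] B'(2)[unfolded that(5)] not_sym[OF B(2)[unfolded that(1)]] not_sym[OF B'(2)[unfolded that(5)]] sym[OF that(2)] sym[OF that(6)] not_sym[OF that(3)] not_sym[OF that(4)] not_sym[OF that(7)] tf tf' cE cN cV ne not_sym[OF ne] qq not_sym[OF qq] w1 w2)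
    have d_t_s: False if "p = t" "E t r" "r \<noteq> s" "r \<noteq> lt" "p' = s" "E s r'" "r' \<noteq> b" "r' \<noteq> t"
      by (rule no_cn[OF sg gi, of "[F q, e, q, r, t, s, r', q', e', F q']" "F q" "F q'" "w"]) (simp_all add: that B(2)[unfolded that(1)] B'(2)[unfolded that(5)] not_sym[OF B(2)[unfolded that(1)]] not_sym[OF B'(2)[unfolded that(5)]] sym[OF that(2)] sym[OF that(6)] not_sym[OF that(3)] not_sym[OF that(4)] not_sym[OF that(7)] not_sym[OF that(8)] tf tf' cE cN cV ne not_sym[OF ne] qq not_sym[OF qq] w1 w2)
    have d_t_t: False if "p = t" "E t r" "r \<noteq> s" "r \<noteq> lt" "p' = t" "E t r'" "r' \<noteq> s" "r' \<noteq> lt"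
    proof (cases "r = r'")
      case True
      show False by (rule no_cn[OF sg gi, of "[F q, e, q, r, q', e', F q']" "F q" "F q'" "w"]) (simp_all add: B'(1)[folded True] T'(3)[folded True] not_sym[OF T'(3)[folded True]] that B(2)[unfolded that(1)] B'(2)[unfolded that(5)] not_sym[OF B(2)[unfolded that(1)]] not_sym[OF B'(2)[unfolded that(5)]] sym[OF that(2)] sym[OF that(6)] not_sym[OF that(3)] not_sym[OF that(4)] not_sym[OF that(7)] not_sym[OF that(8)] tf tf' cE cN cV ne not_sym[OF ne] qq not_sym[OF qq] w1 w2)
    next
      case False
      show False by (rule no_cn[OF sg gi, of "[F q, e, q, r, t, r', q', e', F q']" "F q" "F q'" "w"]) (simp_all add: False not_sym[OF False] that B(2)[unfolded that(1)] B'(2)[unfolded that(5)] not_sym[OF B(2)[unfolded that(1)]] not_sym[OF B'(2)[unfolded that(5)]] sym[OF that(2)] sym[OF that(6)] not_sym[OF that(3)] not_sym[OF that(4)] not_sym[OF that(7)] not_sym[OF that(8)] tf tf' cE cN cV ne not_sym[OF ne] qq not_sym[OF qq] w1 w2)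
    qed
    have Y_s1: False if h: "p = s1" "E s1 r" "r \<noteq> a"
      using B3' d_s1_s1[OF h] d_s1_s[OF h] d_s1_t[OF h] by blast
    have Y_s: False if h: "p = s" "E s r" "r \<noteq> b" "r \<noteq> t"
      using B3' d_s_s1[OF h] d_s_s[OF h] d_s_t[OF h] by blast
    have Y_t: False if h: "p = t" "E t r" "r \<noteq> s" "r \<noteq> lt"
      using B3' d_t_s1[OF h] d_t_s[OF h] d_t_t[OF h] by blast
    show False using B3 Y_s1 Y_s Y_t by blast
  qed  define S0 where "S0 = F ` D"
  define I1 where "I1 = {a, b, lt}"
  define I2 where "I2 = {l1, s1, s, t}"
  have FV: "F q \<in> V" if "q \<in> D" for q
  proof -
    from F that obtain r p e where "E e (F q)" by blast
    then show ?thesis by (rule inV2)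
  qed
  have I1int: False if "x \<in> I1" "y \<in> I1" "x \<noteq> y" "E x w" "E y w" for x y w
  proof -
    have ab': False if "E a w" "E b w"
      by (rule no_cn[OF sg gi, of "[a, b]" a b w]) (simp_all add: that cE cN cV)
    have alt: False if "a \<noteq> lt" "E a w" "E lt w"
      by (rule no_cn[OF sg gi, of "[a, b, s, t, lt]" a lt w]) (simp_all add: that cE cN cV)
    have blt: False if "b \<noteq> lt" "E b w" "E lt w"
      by (rule no_cn[OF sg gi, of "[b, s, t, lt]" b lt w]) (simp_all add: that cE cN cV)
    note xy = that(3) and wx = that(4) and wy = that(5)
    have x3: "x = a \<or> x = b \<or> x = lt" and y3: "y = a \<or> y = b \<or> y = lt" using that(1,2) unfolding I1_def by auto
    have k_a_a: False if "x = a" "y = a" using that xy by simp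
    have k_a_b: False if hx: "x = a" and hy: "y = b"
      using ab'[OF wx[unfolded hx] wy[unfolded hy]] by simp
    have k_a_lt: False if hx: "x = a" and hy: "y = lt"
      using alt[OF _ wx[unfolded hx] wy[unfolded hy]] xy hx hy by simp
    have k_b_a: False if hx: "x = b" and hy: "y = a"
      using ab'[OF wy[unfolded hy] wx[unfolded hx]] by simp
    have k_b_b: False if "x = b" "y = b" using that xy by simp
    have k_b_lt: False if hx: "x = b" and hy: "y = lt"
      using blt[OF _ wx[unfolded hx] wy[unfolded hy]] xy hx hy by simp
    have k_lt_a: False if hx: "x = lt" and hy: "y = a"
      using alt[OF _ wy[unfolded hy] wx[unfolded hx]] xy hx hy by simp
    have k_lt_b: False if hx: "x = lt" and hy: "y = b"
      using blt[OF _ wy[unfolded hy] wx[unfolded hx]] xy hx hy by simp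
    have k_lt_lt: False if "x = lt" "y = lt" using that xy by simp
    from x3 show False
    proof (elim disjE)
      assume hx: "x = a"
      show False using y3 k_a_a[OF hx] k_a_b[OF hx] k_a_lt[OF hx] by blast
    next
      assume hx: "x = b"
      show False using y3 k_b_a[OF hx] k_b_b[OF hx] k_b_lt[OF hx] by blast
    next
      assume hx: "x = lt"
      show False using y3 k_lt_a[OF hx] k_lt_b[OF hx] k_lt_lt[OF hx] by blast
    qed
  qed
  have opS: "open_packing V E (S0 \<union> I1)"
    unfolding open_packing_def
  proof (intro conjI ballI impI)
    show "S0 \<union> I1 \<subseteq> V" using FV cV unfolding S0_def I1_def by auto
    fix x y assume x: "x \<in> S0 \<union> I1" and y: "y \<in> S0 \<union> I1" and xy: "x \<noteq> y"
    show "\<not> (\<exists>w\<in>V. E x w \<and> E y w)"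
    proof
      assume "\<exists>w\<in>V. E x w \<and> E y w"
      then obtain w where w: "E x w" "E y w" by blast
      consider "x \<in> S0" "y \<in> S0" | "x \<in> S0" "y \<in> I1" | "x \<in> I1" "y \<in> S0" | "x \<in> I1" "y \<in> I1"
        using x y by blast
      then show False
      proof cases
        case 1
        then obtain q q' where "q \<in> D" "q' \<in> D" "x = F q" "y = F q'" unfolding S0_def by blast
        then show False using R1[of q q' w] xy w by blast
      next
        case 2
        then obtain q where "q \<in> D" "x = F q" unfolding S0_def by blast
        then show False using R2[of q y w] xy w 2 unfolding I1_def by blast
      next
        case 3
        then obtain q where "q \<in> D" "y = F q" unfolding S0_def by blast
        then show False using R2[of q x w] xy w 3 unfolding I1_def by blast
      next
        case 4
        then show False using I1int xy w by blast
      qed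
    qed
  qed
  obtain P where Pmax: "maximal_open_packing V E P" and PS: "S0 \<union> I1 \<subseteq> P"
    using max_ext[OF sg opS] by blast
  have opP: "open_packing V E P" using Pmax unfolding maximal_open_packing_def by simp
  have PP: False if "x \<in> P" "y \<in> P" "x \<noteq> y" "E x w" "E y w" for x y w
  proof -
    have "w \<in> V" using inV2[OF that(4)] .
    then show False using opP that unfolding open_packing_def by blast
  qed
  have aP: "a \<in> P" and bP: "b \<in> P" and ltP: "lt \<in> P" using PS unfolding I1_def by auto
  have l1P: "l1 \<notin> P" using PP[OF _ aP l1a sym[OF l1(1)] sym[OF s1a]] by blast
  have s1P: "s1 \<notin> P" using PP[OF _ bP s1b s1a sym[OF ab]] by blast
  have sP: "s \<notin> P" using PP[OF _ ltP slt st sym[OF tlt(1)]] by blast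
  have tP: "t \<notin> P" using PP[OF _ bP not_sym[OF bt] sym[OF st] bs] by blast
  have dom: False if "x \<in> P" "br x r p" for x r p
  proof -
    have "x \<in> D" using that unfolding D_def by blast
    then obtain r' p' e where T: "E x e" "E e (F x)" "F x \<noteq> x" using F by blast
    have "F x \<in> P" using PS \<open>x \<in> D\<close> unfolding S0_def by blast
    then show False using PP[OF that(1) _ not_sym[OF T(3)] T(1) sym[OF T(2)]] by blast
  qed
  have l1only: "\<And>y. E l1 y \<Longrightarrow> y = s1" using leaf_uniq[OF sg l1(2) _ sym[OF l1(1)]] by blast
  have ltonly: "\<And>y. E lt y \<Longrightarrow> y = t" using leaf_uniq[OF sg tlt(2) _ sym[OF tlt(1)]] by blast
  have DOM: False if "x \<in> P" "x \<notin> I1" "v \<in> I2" "E x w" "E v w" for x v w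
  proof -
    have xa: "x \<noteq> a" and xb: "x \<noteq> b" and xlt: "x \<noteq> lt" using that(2) unfolding I1_def by auto
    have xs1: "x \<noteq> s1" and xs: "x \<noteq> s" and xt: "x \<noteq> t" using that(1) s1P sP tP by auto
    have v4: "v = l1 \<or> v = s1 \<or> v = s \<or> v = t" using that(3) unfolding I2_def by auto
    { assume "v = l1"
      then have "w = s1" using l1only that(5) by simp
      then have False using PP[OF that(1) aP xa] that(4) sym[OF s1a] by blast }
    moreover
    { assume v: "v = s1"
      have False
      proof (cases "w = a")
        case True then show False using PP[OF that(1) bP xb] that(4) sym[OF ab] by blast
      next
        case False
        have "br x w s1" unfolding br_def using False v that(4,5) sym[OF that(4)] xs1 by simp
        then show False using dom[OF that(1)] by blast
      qed }
    moreover
    { assume v: "v = s"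
      have False
      proof (cases "w = b")
        case True then show False using PP[OF that(1) aP xa] that(4) ab by blast
      next
        case False
        show False
        proof (cases "w = t")
          case True then show False using PP[OF that(1) ltP xlt] that(4) sym[OF tlt(1)] by blast
        next
          case False2: False
          have "br x w s" unfolding br_def using False False2 v that(4,5) sym[OF that(4)] xs by simp
          then show False using dom[OF that(1)] by blast
        qed
      qed }
    moreover
    { assume v: "v = t"
      have False
      proof (cases "w = s")
        case True then show False using PP[OF that(1) bP xb] that(4) bs by blast
      next
        case False
        have wlt: "w \<noteq> lt"
        proof
          assume "w = lt"
          then have "E lt x" using sym[OF that(4)] by simp
          then have "x = t" using ltonly by blast
          then show False using xt by simp
        qed
        have "br x w t" unfolding br_def using False wlt v that(4,5) sym[OF that(4)] xt by simp
        then show False using dom[OF that(1)] by blast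
      qed }
    ultimately show False using v4 by blast
  qed
  have ne_l1s1: "l1 \<noteq> s1" using nl l1(1) by auto
  have ne_l1s: "l1 \<noteq> s"
  proof
    assume h: "l1 = s"
    have "hd [l1, s1, a, b, s] = last [l1, s1, a, b, s]" using h by simp
    then show False by (rule no_eq[OF sg gi, rotated 4]) (simp_all add: cE cN cV)
  qed
  have ne_l1t: "l1 \<noteq> t"
  proof
    assume h: "l1 = t"
    have "hd [l1, s1, a, b, s, t] = last [l1, s1, a, b, s, t]" using h by simp
    then show False by (rule no_eq[OF sg gi, rotated 4]) (simp_all add: cE cN cV)
  qed
  have ne_s1s: "s1 \<noteq> s"
  proof
    assume h: "s1 = s"
    have "hd [s1, a, b, s] = last [s1, a, b, s]" using h by simp
    then show False by (rule no_eq[OF sg gi, rotated 4]) (simp_all add: cE cN cV)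
  qed
  have ne_s1t: "s1 \<noteq> t"
  proof
    assume h: "s1 = t"
    have "hd [s1, a, b, s, t] = last [s1, a, b, s, t]" using h by simp
    then show False by (rule no_eq[OF sg gi, rotated 4]) (simp_all add: cE cN cV)
  qed
  have ne_st: "s \<noteq> t" using nl st by auto
  have I2int: False if "x \<in> I2" "y \<in> I2" "x \<noteq> y" "E x w" "E y w" for x y w
  proof -
    have p1: False if "E l1 w" "E s1 w"
      by (rule no_cn[OF sg gi, of "[l1, s1]" l1 s1 w]) (simp_all add: that cE cN cV nl ne_l1s1 ne_l1s ne_l1t ne_s1s ne_s1t ne_st)
    have p2: False if "E l1 w" "E s w"
      by (rule no_cn[OF sg gi, of "[l1, s1, a, b, s]" l1 s w]) (simp_all add: that cE cN cV ne_l1s1 ne_l1s ne_l1t ne_s1s ne_s1t ne_st)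
    have p3: False if "E l1 w" "E t w"
      by (rule no_cn[OF sg gi, of "[l1, s1, a, b, s, t]" l1 t w]) (simp_all add: that cE cN cV ne_l1s1 ne_l1s ne_l1t ne_s1s ne_s1t ne_st)
    have p4: False if "E s1 w" "E s w"
      by (rule no_cn[OF sg gi, of "[s1, a, b, s]" s1 s w]) (simp_all add: that cE cN cV ne_l1s1 ne_l1s ne_l1t ne_s1s ne_s1t ne_st)
    have p5: False if "E s1 w" "E t w"
      by (rule no_cn[OF sg gi, of "[s1, a, b, s, t]" s1 t w]) (simp_all add: that cE cN cV ne_l1s1 ne_l1s ne_l1t ne_s1s ne_s1t ne_st)
    have p6: False if "E s w" "E t w"
      by (rule no_cn[OF sg gi, of "[s, t]" s t w]) (simp_all add: that cE cN cV nl ne_l1s1 ne_l1s ne_l1t ne_s1s ne_s1t ne_st)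
    note xy = that(3) and wx = that(4) and wy = that(5)
    have x3: "x = l1 \<or> x = s1 \<or> x = s \<or> x = t" and y3: "y = l1 \<or> y = s1 \<or> y = s \<or> y = t" using that(1,2) unfolding I2_def by auto
    have k_l1_l1: False if "x = l1" "y = l1" using that xy by simp
    have k_l1_s1: False if hx: "x = l1" and hy: "y = s1"
      using p1[OF wx[unfolded hx] wy[unfolded hy]] by simp
    have k_l1_s: False if hx: "x = l1" and hy: "y = s"
      using p2[OF wx[unfolded hx] wy[unfolded hy]] by simp
    have k_l1_t: False if hx: "x = l1" and hy: "y = t"
      using p3[OF wx[unfolded hx] wy[unfolded hy]] by simp
    have k_s1_l1: False if hx: "x = s1" and hy: "y = l1"
      using p1[OF wy[unfolded hy] wx[unfolded hx]] by simp
    have k_s1_s1: False if "x = s1" "y = s1" using that xy by simp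
    have k_s1_s: False if hx: "x = s1" and hy: "y = s"
      using p4[OF wx[unfolded hx] wy[unfolded hy]] by simp
    have k_s1_t: False if hx: "x = s1" and hy: "y = t"
      using p5[OF wx[unfolded hx] wy[unfolded hy]] by simp
    have k_s_l1: False if hx: "x = s" and hy: "y = l1"
      using p2[OF wy[unfolded hy] wx[unfolded hx]] by simp
    have k_s_s1: False if hx: "x = s" and hy: "y = s1"
      using p4[OF wy[unfolded hy] wx[unfolded hx]] by simp
    have k_s_s: False if "x = s" "y = s" using that xy by simp
    have k_s_t: False if hx: "x = s" and hy: "y = t"
      using p6[OF wx[unfolded hx] wy[unfolded hy]] by simp
    have k_t_l1: False if hx: "x = t" and hy: "y = l1"
      using p3[OF wy[unfolded hy] wx[unfolded hx]] by simp
    have k_t_s1: False if hx: "x = t" and hy: "y = s1"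
      using p5[OF wy[unfolded hy] wx[unfolded hx]] by simp
    have k_t_s: False if hx: "x = t" and hy: "y = s"
      using p6[OF wy[unfolded hy] wx[unfolded hx]] by simp
    have k_t_t: False if "x = t" "y = t" using that xy by simp
    from x3 show False
    proof (elim disjE)
      assume hx: "x = l1"
      show False using y3 k_l1_l1[OF hx] k_l1_s1[OF hx] k_l1_s[OF hx] k_l1_t[OF hx] by blast
    next
      assume hx: "x = s1"
      show False using y3 k_s1_l1[OF hx] k_s1_s1[OF hx] k_s1_s[OF hx] k_s1_t[OF hx] by blast
    next
      assume hx: "x = s"
      show False using y3 k_s_l1[OF hx] k_s_s1[OF hx] k_s_s[OF hx] k_s_t[OF hx] by blast
    next
      assume hx: "x = t"
      show False using y3 k_t_l1[OF hx] k_t_s1[OF hx] k_t_s[OF hx] k_t_t[OF hx] by blast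
    qed
  qed
  define Q where "Q = (P - I1) \<union> I2"
  have opQ: "open_packing V E Q"
    unfolding open_packing_def
  proof (intro conjI ballI impI)
    show "Q \<subseteq> V" using opP cV unfolding Q_def I2_def open_packing_def by auto
    fix x y assume x: "x \<in> Q" and y: "y \<in> Q" and xy: "x \<noteq> y"
    show "\<not> (\<exists>w\<in>V. E x w \<and> E y w)"
    proof
      assume "\<exists>w\<in>V. E x w \<and> E y w"
      then obtain w where w: "E x w" "E y w" by blast
      consider "x \<in> P - I1" "y \<in> P - I1" | "x \<in> P - I1" "y \<in> I2" | "x \<in> I2" "y \<in> P - I1"
        | "x \<in> I2" "y \<in> I2"
        using x y unfolding Q_def by blast
      then show False
      proof cases
        case 1 then show False using PP xy w by blast
      next
        case 2 then show False using DOM w by blast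
      next
        case 3 then show False using DOM w by blast
      next
        case 4 then show False using I2int xy w by blast
      qed
    qed
  qed
  have finP: "finite P" using opP sg unfolding open_packing_def simple_graph_def
    by (auto intro: finite_subset)
  have I1P: "I1 \<subseteq> P" using PS by blast
  have cI1: "card I1 \<le> 3" unfolding I1_def by (auto simp: card_insert_if)
  have cI2: "card I2 = 4" unfolding I2_def
    using ne_l1s1 ne_l1s ne_l1t ne_s1s ne_s1t ne_st by auto
  have disj: "(P - I1) \<inter> I2 = {}" using l1P s1P sP tP unfolding I2_def by auto
  have "card Q = card (P - I1) + card I2" unfolding Q_def
    by (rule card_Un_disjoint) (use finP disj in \<open>auto simp: I2_def\<close>)
  moreover have "card (P - I1) = card P - card I1" using I1P finP by (simp add: card_Diff_subset finite_subset)
  moreover have "card I1 \<le> card P" using I1P finP by (simp add: card_mono)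
  ultimately have "card P < card Q" using cI1 cI2 by linarith
  then show False using U_contra[OF sg U Pmax opQ] by simp
qed


end
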